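(* In the setting of the context, let $E(t)=\tilde E e^{-\delta t}+\tilde S e^{(\beta/\gamma)\tilde R}e^{-\delta t}\int_{\varphi^{-1}(t)}^{u_0}e^{\delta\varphi(v)}dv$ for $t\ge0$. Then $E(\infty):=\lim_{t\to\infty}E(t)=0$, $E(t)>0$ on $[0,\infty)$, and $E$ attains its maximum $\max_{t\ge0}E(t)$ at some $t=T_1\in\{T: E'(T)=0\}$, where for $T>0$ \[ E'(T)=\Bigl(\frac{\delta}{\beta}+\tilde S e^{(\beta/\gamma)\tilde R}\varphi^{-1}(T)\Bigr)\psi\bigl(\varphi^{-1}(T)\bigr)-\delta\Bigl(N-\tilde S e^{(\beta/\gamma)\tilde R}\varphi^{-1}(T)+\frac{\gamma}{\beta}\log\varphi^{-1}(T)\Bigr). \]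
   Context: Let $\beta,\gamma,\delta>0$ be constants and $\tilde S,\tilde E,\tilde I,\tilde R$ real numbers with $N:=\tilde S+\tilde E+\tilde I+\tilde R>0$. Standing assumptions: (A1) $\tilde I>0$; (A2) $\tilde E>(\gamma/\delta)\tilde I$; (A3) $\tilde S>\delta\tilde E/(\beta\tilde I)$; (A4) $\tilde R\ge 0$ and $N>\tilde S e^{(\beta/\gamma)\tilde R}+\tilde R$. Let $\alpha$ be the unique solution in $(\tilde R,N)$ of $x=N-\tilde S e^{(\beta/\gamma)\tilde R}e^{-(\beta/\gamma)x}$, and assume (A5) $\tilde S<(\gamma/\beta)e^{(\beta/\gamma)(\alpha-\tilde R)}$. Put $u_0:=e^{-(\beta/\gamma)\tilde R}$, $u_\infty:=e^{-(\beta/\gamma)\alpha}$. Let $\psi$ be the unique function, continuous and positive on $(u_\infty,u_0]$ and $C^1$ on $(u_\infty,u_0)$, satisfying $\psi'(u)\psi(u)-\frac{\gamma+\delta}{u}\psi(u)=-\delta\,\frac{\beta N-\beta\tilde S e^{(\beta/\gamma)\tilde R}u+\gamma\log u}{u}$ on $(u_\infty,u_0)$ and $\psi(u_0)=\beta\tilde I$. Let $\varphi(u):=\int_u^{u_0}\frac{d\xi}{\xi\psi(\xi)}$; $\varphi$ is a strictly decreasing continuous bijection from $(u_\infty,u_0]$ onto $[0,\infty)$, $C^1$ on $(u_\infty,u_0)$, with inverse $\varphi^{-1}:[0,\infty)\to(u_\infty,u_0]$. *)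

theory Defs
  imports "HOL-Analysis.Analysis"
begin

definition seir_phi :: "(real \<Rightarrow> real) \<Rightarrow> real \<Rightarrow> real \<Rightarrow> real" where
  "seir_phi \<psi> u0 u = integral {u..u0} (\<lambda>\<xi>. 1 / (\<xi> * \<psi> \<xi>))"

definition seir_phi_inv :: "(real \<Rightarrow> real) \<Rightarrow> real \<Rightarrow> real \<Rightarrow> real \<Rightarrow> real" where
  "seir_phi_inv \<psi> uinf u0 t = the_inv_into {uinf<..u0} (seir_phi \<psi> u0) t"

end

theory Submission
  imports Defs
begin
lemma mvt_deriv:
  fixes f f' :: "real \<Rightarrow> real"
  assumes "a < b" "continuous_on {a..b} f"
    "\<And>x. a < x \<Longrightarrow> x < b \<Longrightarrow> (f has_real_derivative f' x) (at x)"
  shows "\<exists>z. a < z \<and> z < b \<and> f b - f a = (b - a) * f' z"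
proof -
  obtain l z where "a < z" "z < b" "DERIV f z :> l" "f b - f a = (b - a) * l"
    using MVT[OF assms(1,2)] assms(3) real_differentiable_def by blast
  moreover have "l = f' z" using DERIV_unique[OF \<open>DERIV f z :> l\<close> assms(3)[OF \<open>a<z\<close> \<open>z<b\<close>]] .
  ultimately show ?thesis by blast
qed

lemma int_upper_cont:
  fixes g :: "real \<Rightarrow> real"
  assumes "continuous_on {a..b} g"
  shows "continuous_on {a..b} (\<lambda>y. integral {y..b} g)"
  using indefinite_integral_continuous_1'[OF integrable_continuous_real[OF assms]] .

lemma int_upper_deriv:
  fixes g :: "real \<Rightarrow> real"
  assumes cg: "\<And>a. l < a \<Longrightarrow> continuous_on {a..b} g" and x: "l < x" "x < b"
  shows "((\<lambda>y. integral {y..b} g) has_real_derivative (- g x)) (at x)"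
proof -
  define c where "c = (l + x) / 2"
  have c: "l < c" "c < x" using x by (auto simp: c_def)
  have cc: "continuous_on {c..b} g" using cg c by auto
  have "((\<lambda>u. integral {c..u} g) has_vector_derivative g x) (at x within {c..b})"
    by (rule integral_has_vector_derivative[OF cc]) (use c x in auto)
  then have d1: "((\<lambda>u. integral {c..u} g) has_real_derivative g x) (at x)"
    using at_within_Icc_at[of c x b] c x by (simp add: has_real_derivative_iff_has_vector_derivative)
  have d2: "((\<lambda>u. integral {c..b} g - integral {c..u} g) has_real_derivative (0 - g x)) (at x)"
    by (rule DERIV_diff[OF DERIV_const d1])
  show ?thesis
  proof (rule has_field_derivative_transform_within_open[OF _ open_greaterThanLessThan[of c b]])
    show "x \<in> {c<..<b}" using c x by auto
    show "((\<lambda>u. integral {c..b} g - integral {c..u} g) has_real_derivative - g x) (at x)" using d2 by simp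
    fix y assume y: "y \<in> {c<..<b}"
    have "integral {c..y} g + integral {y..b} g = integral {c..b} g"
      using Henstock_Kurzweil_Integration.integral_combine[OF _ _ integrable_continuous_real[OF cc], of y] y by auto
    then show "integral {c..b} g - integral {c..y} g = integral {y..b} g" by simp
  qed
qed

lemma neg_from_prod: "0 < (a::real) * b \<Longrightarrow> b < 0 \<Longrightarrow> a < 0"
  using mult_nonneg_nonpos[of a b] by linarith

lemma alg_ode:
  fixes x p d \<beta> \<gamma> \<delta> S ex N :: real
  assumes "x > 0" "p > 0" "\<beta> > 0"
    "d * p - ((\<gamma> + \<delta>) / x) * p = - \<delta> * ((\<beta> * N - \<beta> * S * ex * x + \<gamma> * ln x) / x)"
  shows "x * d * p = (\<gamma> + \<delta>) * p - \<delta> * (\<beta> * N - \<beta> * (S * ex) * x + \<gamma> * ln x)"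
proof -
  have eq: "d * p = ((\<gamma> + \<delta>) / x) * p - \<delta> * ((\<beta> * N - \<beta> * S * ex * x + \<gamma> * ln x) / x)"
    using assms(4) by linarith
  have "x * (d * p) = x * (((\<gamma> + \<delta>) / x) * p - \<delta> * ((\<beta> * N - \<beta> * S * ex * x + \<gamma> * ln x) / x))"
    using eq by (rule arg_cong)
  then have "x * d * p = x * (((\<gamma> + \<delta>) / x) * p - \<delta> * ((\<beta> * N - \<beta> * S * ex * x + \<gamma> * ln x) / x))"
    by (simp only: mult.assoc)
  also have "\<dots> = (\<gamma> + \<delta>) * p - \<delta> * (\<beta> * N - \<beta> * (S * ex) * x + \<gamma> * ln x)"
    using assms(1) by (simp add: field_simps)
  finally show ?thesis .
qed

lemma alg_D:
  fixes x p d \<beta> \<gamma> \<delta> K N :: real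
  assumes "x > 0" "p > 0" "\<beta> > 0"
    "x * d * p = (\<gamma> + \<delta>) * p - \<delta> * (\<beta> * N - \<beta> * K * x + \<gamma> * ln x)"
  shows "((- \<beta> * K + \<gamma> / x - d) / \<beta>) * (- x * p)
     = (\<delta> / \<beta> + K * x) * p - \<delta> * (N - K * x + (\<gamma> / \<beta>) * ln x)"
proof -
  have "((- \<beta> * K + \<gamma> / x - d) / \<beta>) * (- x * p) = (\<beta> * K * x * p - \<gamma> * p + x * d * p) / \<beta>"
    using assms(1,3) by (simp add: field_simps)
  also have "\<dots> = (\<beta> * K * x * p - \<gamma> * p + ((\<gamma> + \<delta>) * p - \<delta> * (\<beta> * N - \<beta> * K * x + \<gamma> * ln x))) / \<beta>"
    using assms(4) by simp
  also have "\<dots> = (\<delta> / \<beta> + K * x) * p - \<delta> * (N - K * x + (\<gamma> / \<beta>) * ln x)"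
    using assms(3) by (simp add: field_simps)
  finally show ?thesis .
qed

lemma alg_F:
  fixes x p d \<beta> \<gamma> \<delta> K N e :: real
  assumes "x > 0" "p > 0" "\<beta> > 0"
    "x * d * p = (\<gamma> + \<delta>) * p - \<delta> * (\<beta> * N - \<beta> * K * x + \<gamma> * ln x)"
  shows "K * (- e) - (e * (\<delta> * (- (1 / (x * p)))) * (((\<beta> * N - \<beta> * K * x + \<gamma> * ln x) - p) / \<beta>)
           + e * ((- \<beta> * K + \<gamma> / x - d) / \<beta>)) = 0"
proof -
  define hx where "hx = \<beta> * N - \<beta> * K * x + \<gamma> * ln x"
  have o: "x * d * p = (\<gamma> + \<delta>) * p - \<delta> * hx" using assms(4) by (simp add: hx_def)
  have "K * (- e) - (e * (\<delta> * (- (1 / (x * p)))) * ((hx - p) / \<beta>)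
           + e * ((- \<beta> * K + \<gamma> / x - d) / \<beta>))
     = e * (\<delta> * (hx - p) - \<gamma> * p + x * d * p) / (\<beta> * x * p)"
    using assms(1,2,3) by (simp add: field_simps)
  also have "\<dots> = 0" using o by (simp add: algebra_simps)
  finally show ?thesis by (simp add: hx_def)
qed

theorem theorem9:
  fixes \<beta> \<gamma> \<delta> S E I R N \<alpha> u0 uinf :: real
    and \<psi> \<psi>' :: "real \<Rightarrow> real"
    and Ef Ed :: "real \<Rightarrow> real"
  assumes pos: "\<beta> > 0" "\<gamma> > 0" "\<delta> > 0"
    and N_def: "N = S + E + I + R" and N_pos: "N > 0"
    and A1: "I > 0"
    and A2: "E > (\<gamma> / \<delta>) * I"
    and A3: "S > \<delta> * E / (\<beta> * I)"
    and A4: "R \<ge> 0" "N > S * exp ((\<beta> / \<gamma>) * R) + R"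
    and alpha: "\<alpha> \<in> {R<..<N}"
      "\<alpha> = N - S * exp ((\<beta> / \<gamma>) * R) * exp (- (\<beta> / \<gamma>) * \<alpha>)"
    and A5: "S < (\<gamma> / \<beta>) * exp ((\<beta> / \<gamma>) * (\<alpha> - R))"
    and u0_def: "u0 = exp (- (\<beta> / \<gamma>) * R)"
    and uinf_def: "uinf = exp (- (\<beta> / \<gamma>) * \<alpha>)"
    and psi_cont: "continuous_on {uinf<..u0} \<psi>"
    and psi_pos: "\<And>u. u \<in> {uinf<..u0} \<Longrightarrow> \<psi> u > 0"
    and psi_deriv: "\<And>u. u \<in> {uinf<..<u0} \<Longrightarrow> (\<psi> has_real_derivative \<psi>' u) (at u)"
    and psi'_cont: "continuous_on {uinf<..<u0} \<psi>'"
    and psi_ode: "\<And>u. u \<in> {uinf<..<u0} \<Longrightarrow>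
        \<psi>' u * \<psi> u - ((\<gamma> + \<delta>) / u) * \<psi> u
          = - \<delta> * ((\<beta> * N - \<beta> * S * exp ((\<beta> / \<gamma>) * R) * u + \<gamma> * ln u) / u)"
    and psi_init: "\<psi> u0 = \<beta> * I"
    and phi_bij: "bij_betw (seir_phi \<psi> u0) {uinf<..u0} {0..}"
    and Ef_def: "\<And>t. Ef t = E * exp (- \<delta> * t)
        + S * exp ((\<beta> / \<gamma>) * R) * exp (- \<delta> * t)
          * integral {seir_phi_inv \<psi> uinf u0 t..u0} (\<lambda>v. exp (\<delta> * seir_phi \<psi> u0 v))"
    and Ed_def: "\<And>T. Ed T =
        (\<delta> / \<beta> + S * exp ((\<beta> / \<gamma>) * R) * seir_phi_inv \<psi> uinf u0 T)
          * \<psi> (seir_phi_inv \<psi> uinf u0 T)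
        - \<delta> * (N - S * exp ((\<beta> / \<gamma>) * R) * seir_phi_inv \<psi> uinf u0 T
                 + (\<gamma> / \<beta>) * ln (seir_phi_inv \<psi> uinf u0 T))"
  shows "(Ef \<longlongrightarrow> 0) at_top
    \<and> (\<forall>t\<ge>0. Ef t > 0)
    \<and> (\<forall>T>0. (Ef has_real_derivative Ed T) (at T))
    \<and> (\<exists>T1>0. Ed T1 = 0 \<and> (\<forall>t\<ge>0. Ef t \<le> Ef T1))"
proof -
  have E0: "E > 0" using A2 A1 pos by (smt (verit) divide_pos_pos mult_pos_pos)
  have S0: "S > 0" using A3 E0 A1 pos by (smt (verit) divide_pos_pos mult_pos_pos)
  have uinf0: "uinf > 0" using uinf_def by simp
  have uless: "uinf < u0"
  proof -
    have "- (\<beta> / \<gamma>) * \<alpha> < - (\<beta> / \<gamma>) * R" using alpha(1) pos by (simp add: divide_strict_right_mono)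
    then show ?thesis using uinf_def u0_def by simp
  qed
  define K where "K = S * exp ((\<beta> / \<gamma>) * R)"
  have K0: "K > 0" using S0 by (simp add: K_def)
  define P where "P = seir_phi \<psi> u0"
  define U where "U = seir_phi_inv \<psi> uinf u0"
  define f where "f = (\<lambda>\<xi>::real. 1 / (\<xi> * \<psi> \<xi>))"
  have P_eq: "P = (\<lambda>u. integral {u..u0} f)" by (simp add: P_def seir_phi_def f_def fun_eq_iff)
  have fpos: "\<And>x. x \<in> {uinf<..u0} \<Longrightarrow> f x > 0" unfolding f_def using psi_pos uinf0
    by (metis divide_pos_pos greaterThanAtMost_iff less_trans mult_pos_pos zero_less_one)
  have fcont: "continuous_on {a..u0} f" if "uinf < a" for a
  proof -
    have c: "continuous_on {a..u0} \<psi>" using psi_cont by (rule continuous_on_subset) (use that in auto)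
    have nz: "x * \<psi> x \<noteq> 0" if "x \<in> {a..u0}" for x
    proof -
      have "\<psi> x > 0" "x > 0" using psi_pos[of x] that \<open>uinf < a\<close> uinf0 by auto
      then show ?thesis by simp
    qed
    show ?thesis unfolding f_def by (intro continuous_intros c) (use nz in auto)
  qed
  have Pcont: "continuous_on {a..u0} P" if "uinf < a" for a
    unfolding P_eq by (rule int_upper_cont[OF fcont[OF that]])
  have Pder: "(P has_real_derivative - f x) (at x)" if "uinf < x" "x < u0" for x
    unfolding P_eq by (rule int_upper_deriv[OF fcont that])
  have Pmono: "P v < P u" if uv: "uinf < u" "u < v" "v \<le> u0" for u v
  proof -
    have "continuous_on {u..v} P" using Pcont[OF that(1)] by (rule continuous_on_subset) (use that in auto)
    moreover have "(P has_real_derivative - f x) (at x)" if "u < x" "x < v" for x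
      using Pder[of x] uv that by simp
    ultimately have "\<exists>z. u < z \<and> z < v \<and> P v - P u = (v - u) * (- f z)"
      by (rule mvt_deriv[OF uv(2)])
    then obtain z where z: "u < z" "z < v" "P v - P u = (v - u) * (- f z)" by blast
    have "f z > 0" using fpos z uv by auto
    then have "(v - u) * (- f z) < 0" using uv by (simp add: mult_pos_neg)
    then show ?thesis using z by linarith
  qed
  have Pu0: "P u0 = 0" by (simp add: P_eq)
  have inj: "inj_on P {uinf<..u0}"
  proof (rule inj_onI)
    fix x y assume "x \<in> {uinf<..u0}" "y \<in> {uinf<..u0}" "P x = P y"
    then show "x = y" using Pmono[of x y] Pmono[of y x] by (cases x y rule: linorder_cases) auto
  qed
  have img: "P ` {uinf<..u0} = {0..}" using phi_bij by (simp add: bij_betw_def P_def)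
  have U_in: "U t \<in> {uinf<..u0}" if "t \<ge> 0" for t
    unfolding U_def seir_phi_inv_def P_def[symmetric] by (rule the_inv_into_into[OF inj]) (use img that in auto)
  have PU: "P (U t) = t" if "t \<ge> 0" for t
    unfolding U_def seir_phi_inv_def P_def[symmetric] by (rule f_the_inv_into_f[OF inj]) (use img that in auto)
  have UP: "U (P u) = u" if "u \<in> {uinf<..u0}" for u
    unfolding U_def seir_phi_inv_def P_def[symmetric] by (rule the_inv_into_f_f[OF inj that])
  have U0: "U 0 = u0" using UP[of u0] Pu0 uless by auto
  have Umono: "U t < U s" if "0 \<le> s" "s < t" for s t
  proof (rule ccontr)
    assume "\<not> U t < U s"
    then have "U s < U t \<or> U s = U t" by auto
    then show False
    proof
      assume "U s < U t"
      then have "P (U t) < P (U s)" using Pmono[of "U s" "U t"] U_in[of s] U_in[of t] that by auto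
      then show False using PU that by auto
    next
      assume "U s = U t" then have "P (U s) = P (U t)" by simp
      then show False using PU that by auto
    qed
  qed
  have Ucont: "continuous_on {0..M} U" if "M \<ge> 0" for M
  proof -
    have a: "uinf < U M" using U_in that by auto
    have "continuous_on (P ` {U M..u0}) U"
      by (rule continuous_on_inv[OF Pcont[OF a]]) (use UP a in auto)
    moreover have "{0..M} \<subseteq> P ` {U M..u0}"
    proof
      fix t assume t: "t \<in> {0..M}"
      have "U M \<le> U t" using Umono[of t M] t by (cases "t = M") auto
      moreover have "U t \<le> u0" using U_in t by auto
      ultimately show "t \<in> P ` {U M..u0}" using PU[of t] t by (metis atLeastAtMost_iff image_eqI)
    qed
    ultimately show ?thesis by (rule continuous_on_subset)
  qed
  have Uisc: "isCont U T" if "T > 0" for T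
  proof -
    have "continuous_on {0..T+1} U" using Ucont[of "T+1"] that by simp
    then have "continuous_on {0<..<T+1} U" by (rule continuous_on_subset) auto
    then show ?thesis using that by (simp add: continuous_on_eq_continuous_at)
  qed
  have Uder: "(U has_real_derivative (- U T * \<psi> (U T))) (at T)" if "T > 0" for T
  proof -
    have UT: "uinf < U T" "U T < u0" using U_in[of T] Umono[of 0 T] U0 that by auto
    have "(U has_real_derivative inverse (- f (U T))) (at T)"
      by (rule DERIV_inverse_function[OF Pder[OF UT] _ _ _ _ Uisc[OF that], of 0 "T+1"])
         (use fpos[of "U T"] UT that PU in auto)
    moreover have "inverse (- f (U T)) = - U T * \<psi> (U T)" by (simp add: f_def)
    ultimately show ?thesis by simp
  qed
  have Ef': "Ef t = E * exp (- \<delta> * t) + K * exp (- \<delta> * t)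
        * integral {U t..u0} (\<lambda>v. exp (\<delta> * P v))" for t
    using Ef_def[of t] unfolding K_def P_def U_def by simp
  have Ed': "Ed T = (\<delta> / \<beta> + K * U T) * \<psi> (U T) - \<delta> * (N - K * U T + (\<gamma> / \<beta>) * ln (U T))" for T
    using Ed_def[of T] unfolding K_def U_def by simp
  define h where "h = (\<lambda>u::real. \<beta> * N - \<beta> * K * u + \<gamma> * ln u)"
  define G where "G = (\<lambda>u. (h u - \<psi> u) / \<beta>)"
  define g where "g = (\<lambda>v. exp (\<delta> * P v))"
  define J where "J = (\<lambda>u. integral {u..u0} g)"
  have Ef'': "Ef t = exp (- \<delta> * t) * (E + K * J (U t))" for t
    unfolding Ef' J_def g_def by (simp add: algebra_simps)
  have ode: "x * \<psi>' x * \<psi> x = (\<gamma> + \<delta>) * \<psi> x - \<delta> * h x" if "uinf < x" "x < u0" for x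
  proof -
    have "x * \<psi>' x * \<psi> x = (\<gamma> + \<delta>) * \<psi> x - \<delta> * (\<beta> * N - \<beta> * (S * exp ((\<beta> / \<gamma>) * R)) * x + \<gamma> * ln x)"
      by (rule alg_ode[OF _ psi_pos _ psi_ode]) (use that uinf0 pos in auto)
    then show ?thesis by (simp add: h_def K_def)
  qed
  have Gder: "(G has_real_derivative ((- \<beta> * K + \<gamma> / x - \<psi>' x) / \<beta>)) (at x)" if "uinf < x" "x < u0" for x
  proof -
    have "x > 0" using that uinf0 by simp
    have "((\<lambda>u. (\<beta> * N - \<beta> * K * u + \<gamma> * ln u - \<psi> u) / \<beta>) has_real_derivative
        ((0 - \<beta> * K * 1 + \<gamma> * inverse x - \<psi>' x) / \<beta>)) (at x)"
      by (intro DERIV_cdivide DERIV_diff DERIV_add DERIV_cmult DERIV_const DERIV_ident DERIV_ln psi_deriv)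
         (use that \<open>x > 0\<close> in auto)
    then show ?thesis unfolding G_def h_def by (simp add: divide_inverse)
  qed
  have Gcont: "continuous_on {a..u0} G" if "uinf < a" for a
  proof -
    have c: "continuous_on {a..u0} \<psi>" using psi_cont by (rule continuous_on_subset) (use that in auto)
    have "\<forall>x\<in>{a..u0}. x > 0" using that uinf0 by auto
    then show ?thesis unfolding G_def h_def using pos by (intro continuous_intros c) auto
  qed
  have gcont: "continuous_on {a..u0} g" if "uinf < a" for a
    unfolding g_def by (intro continuous_intros Pcont that)
  have Jcont: "continuous_on {a..u0} J" if "uinf < a" for a
    unfolding J_def by (rule int_upper_cont[OF gcont[OF that]])
  have Jder: "(J has_real_derivative - g x) (at x)" if "uinf < x" "x < u0" for x
    unfolding J_def by (rule int_upper_deriv[OF gcont that])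
  have Ku0: "K * u0 = S" by (simp add: K_def u0_def mult.assoc exp_add[symmetric])
  have Kuinf: "K * uinf = N - \<alpha>" using alpha(2) by (simp add: K_def uinf_def)
  have lnu0: "\<gamma> * ln u0 = - \<beta> * R" using pos by (simp add: u0_def)
  have lnuinf: "\<gamma> * ln uinf = - \<beta> * \<alpha>" using pos by (simp add: uinf_def)
  have hu0: "h u0 = \<beta> * (E + I)"
  proof -
    have "h u0 = \<beta> * N - \<beta> * (K * u0) + \<gamma> * ln u0" by (simp add: h_def)
    also have "\<dots> = \<beta> * (E + I)" using Ku0 lnu0 N_def by (simp add: algebra_simps)
    finally show ?thesis .
  qed
  have huinf: "h uinf = 0"
  proof -
    have "h uinf = \<beta> * N - \<beta> * (K * uinf) + \<gamma> * ln uinf" by (simp add: h_def)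
    also have "\<dots> = 0" unfolding Kuinf lnuinf by (simp add: algebra_simps)
    finally show ?thesis .
  qed
  have Gu0: "G u0 = E" using hu0 psi_init pos by (simp add: G_def field_simps)
  have Ju0: "J u0 = 0" by (simp add: J_def)
  have Fz: "E + K * J u = exp (\<delta> * P u) * G u" if u: "u \<in> {uinf<..u0}" for u
  proof (cases "u = u0")
    case True then show ?thesis using Ju0 Pu0 Gu0 by simp
  next
    case False
    then have u1: "uinf < u" "u < u0" using u by auto
    define F where "F = (\<lambda>u. E + K * J u - exp (\<delta> * P u) * G u)"
    have "continuous_on {u..u0} F" unfolding F_def
      by (intro continuous_intros Jcont Pcont Gcont u1)
    moreover have "(F has_real_derivative 0) (at x)" if x: "u < x" "x < u0" for x
    proof -
      have x1: "uinf < x" "x < u0" "x > 0" using x u1 uinf0 by auto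
      have "(F has_real_derivative (0 + K * (- g x) - (exp (\<delta> * P x) * ((- \<beta> * K + \<gamma> / x - \<psi>' x) / \<beta>)
          + exp (\<delta> * P x) * (\<delta> * (- f x)) * G x))) (at x)"
        unfolding F_def g_def
        by (intro DERIV_diff DERIV_add DERIV_const DERIV_cmult DERIV_mult' DERIV_fun_exp Jder[unfolded g_def] Pder Gder x1)
      moreover have "K * (- g x) - (exp (\<delta> * P x) * (\<delta> * (- f x)) * G x
          + exp (\<delta> * P x) * ((- \<beta> * K + \<gamma> / x - \<psi>' x) / \<beta>)) = 0"
        unfolding g_def f_def G_def h_def
        by (rule alg_F) (use x1 psi_pos pos ode[OF x1(1,2)] in \<open>auto simp: h_def\<close>)
      moreover have "0 + K * (- g x) - (exp (\<delta> * P x) * ((- \<beta> * K + \<gamma> / x - \<psi>' x) / \<beta>)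
          + exp (\<delta> * P x) * (\<delta> * (- f x)) * G x) = K * (- g x) - (exp (\<delta> * P x) * (\<delta> * (- f x)) * G x
          + exp (\<delta> * P x) * ((- \<beta> * K + \<gamma> / x - \<psi>' x) / \<beta>))" by simp
      ultimately show ?thesis by simp
    qed
    ultimately have "\<exists>z. u < z \<and> z < u0 \<and> F u0 - F u = (u0 - u) * 0"
      by (intro mvt_deriv u1)
    then have "F u = F u0" by auto
    also have "F u0 = 0" using Ju0 Pu0 Gu0 by (simp add: F_def)
    finally show ?thesis by (simp add: F_def)
  qed
  have EfG: "Ef t = G (U t)" if "t \<ge> 0" for t
  proof -
    have "Ef t = exp (- \<delta> * t) * (exp (\<delta> * P (U t)) * G (U t))" unfolding Ef'' Fz[OF U_in[OF that]] ..
    also have "\<dots> = (exp (- \<delta> * t) * exp (\<delta> * t)) * G (U t)" using PU[OF that] by simp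
    also have "exp (- \<delta> * t) * exp (\<delta> * t) = 1" by (simp add: exp_add[symmetric])
    finally show ?thesis by simp
  qed
  have Efder: "(Ef has_real_derivative Ed T) (at T)" if T: "T > 0" for T
  proof -
    have UT: "uinf < U T" "U T < u0" using U_in[of T] Umono[of 0 T] U0 T by auto
    have d: "((\<lambda>t. G (U t)) has_real_derivative
       ((- \<beta> * K + \<gamma> / U T - \<psi>' (U T)) / \<beta>) * (- U T * \<psi> (U T))) (at T)"
      by (rule DERIV_chain2[OF Gder[OF UT] Uder[OF T]])
    have "((- \<beta> * K + \<gamma> / U T - \<psi>' (U T)) / \<beta>) * (- U T * \<psi> (U T)) = Ed T"
      unfolding Ed' by (rule alg_D) (use UT uinf0 psi_pos pos ode[OF UT] in \<open>auto simp: h_def\<close>)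
    with d have "((\<lambda>t. G (U t)) has_real_derivative Ed T) (at T)" by simp
    then show ?thesis
      by (rule has_field_derivative_transform_within_open[of _ _ _ "{0<..}"]) (use T EfG in auto)
  qed
  have Efpos: "Ef t > 0" if "t \<ge> 0" for t
  proof -
    have "U t \<le> u0" using U_in that by auto
    have "uinf < U t" using U_in that by auto
    then have "J (U t) \<ge> 0" unfolding J_def g_def
      by (intro integral_nonneg integrable_continuous_real continuous_on_subset[OF gcont[unfolded g_def]]) auto
    then show ?thesis unfolding Ef'' using E0 K0 by (simp add: add_pos_nonneg)
  qed
  have Ulim: "(U \<longlongrightarrow> uinf) at_top"
  proof (rule order_tendstoI)
    fix a assume a: "a < uinf"
    show "eventually (\<lambda>t. a < U t) at_top"
      using eventually_ge_at_top[of 0]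
    proof eventually_elim
      case (elim t) then show ?case using U_in[of t] a by auto
    qed
  next
    fix a assume a: "uinf < a"
    show "eventually (\<lambda>t. U t < a) at_top"
    proof (cases "a > u0")
      case True
      show ?thesis using eventually_ge_at_top[of 0]
      proof eventually_elim
        case (elim t) then show ?case using U_in[of t] True by auto
      qed
    next
      case False
      then have aa: "a \<in> {uinf<..u0}" using a by auto
      then have Pa: "P a \<ge> 0" using img by auto
      show ?thesis using eventually_gt_at_top[of "P a"]
      proof eventually_elim
        case (elim t)
        then have t0: "t \<ge> 0" using Pa by simp
        show ?case
        proof (rule ccontr)
          assume "\<not> U t < a"
          then have "a < U t \<or> a = U t" by auto
          then show False
          proof
            assume "a < U t"
            then have "P (U t) < P a" using Pmono[of a "U t"] aa U_in[OF t0] by auto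
            then show False using PU[OF t0] elim by simp
          next
            assume "a = U t"
            then show False using PU[OF t0] elim by simp
          qed
        qed
      qed
    qed
  qed
  have hcont: "isCont h uinf" unfolding h_def using uinf0 by (intro continuous_intros) auto
  have hlim: "((\<lambda>t. h (U t)) \<longlongrightarrow> 0) at_top"
    using isCont_tendsto_compose[OF hcont Ulim] huinf by simp
  have Eflim: "(Ef \<longlongrightarrow> 0) at_top"
  proof (rule tendsto_sandwich[of "\<lambda>_. 0" Ef at_top "\<lambda>t. h (U t) / \<beta>"])
    show "eventually (\<lambda>t. 0 \<le> Ef t) at_top" using eventually_ge_at_top[of 0]
      by eventually_elim (use Efpos in force)
    show "eventually (\<lambda>t. Ef t \<le> h (U t) / \<beta>) at_top" using eventually_ge_at_top[of 0]
    proof eventually_elim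
      case (elim t)
      have "\<psi> (U t) > 0" using psi_pos U_in elim by auto
      then show ?case using EfG[OF elim] pos by (simp add: G_def divide_right_mono)
    qed
    show "((\<lambda>_. 0) \<longlongrightarrow> (0::real)) at_top" by simp
    show "((\<lambda>t. h (U t) / \<beta>) \<longlongrightarrow> 0) at_top" using tendsto_divide[OF hlim tendsto_const[of \<beta>]] pos by simp
  qed
  define D where "D = (\<lambda>u. (\<delta> / \<beta> + K * u) * \<psi> u - \<delta> * (N - K * u + (\<gamma> / \<beta>) * ln u))"
  have Du0: "D u0 > 0"
  proof -
    have l: "(\<gamma> / \<beta>) * ln u0 = - R" using lnu0 pos by (simp add: field_simps)
    have "D u0 = (\<delta> / \<beta>) * (\<beta> * I) + S * (\<beta> * I) - \<delta> * (N - S - R)"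
      unfolding D_def using Ku0 l psi_init by (simp add: algebra_simps)
    also have "\<dots> = S * (\<beta> * I) - \<delta> * E" using pos N_def by (simp add: field_simps)
    also have "\<dots> > 0"
    proof -
      have "\<beta> * I > 0" using pos A1 by simp
      then have "\<delta> * E < S * (\<beta> * I)" using A3 by (simp add: divide_less_eq mult.commute)
      then show ?thesis by simp
    qed
    finally show ?thesis .
  qed
  define a0 where "a0 = (uinf + u0) / 2"
  have a0: "uinf < a0" "a0 < u0" using uless by (auto simp: a0_def)
  have Dcont: "continuous_on {a0..u0} D"
  proof -
    have c: "continuous_on {a0..u0} \<psi>" using psi_cont by (rule continuous_on_subset) (use a0 in auto)
    have "\<forall>x\<in>{a0..u0}. x > 0" using a0 uinf0 by auto
    then show ?thesis unfolding D_def using pos by (intro continuous_intros c) auto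
  qed
  obtain d where d: "d > 0" "\<And>x. x \<in> {a0..u0} \<Longrightarrow> dist x u0 < d \<Longrightarrow> dist (D x) (D u0) < D u0"
    using Dcont Du0 a0 unfolding continuous_on_iff by (metis atLeastAtMost_iff less_imp_le order_refl)
  define u1 where "u1 = max a0 (u0 - d / 2)"
  have u1: "a0 \<le> u1" "u1 < u0" "uinf < u1" using d a0 by (auto simp: u1_def)
  have Gneg: "(- \<beta> * K + \<gamma> / z - \<psi>' z) / \<beta> < 0" if z: "u1 < z" "z < u0" for z
  proof -
    have zz: "uinf < z" "z > 0" using z u1 uinf0 by auto
    have "D z > 0"
    proof -
      have "u0 - d / 2 \<le> u1" by (simp add: u1_def)
      then have "z \<in> {a0..u0}" "dist z u0 < d" using z u1(1) d(1) by (auto simp: dist_real_def)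
      then have "dist (D z) (D u0) < D u0" by (rule d(2))
      then show ?thesis by (auto simp: dist_real_def)
    qed
    moreover have "((- \<beta> * K + \<gamma> / z - \<psi>' z) / \<beta>) * (- z * \<psi> z) = D z"
      unfolding D_def by (rule alg_D) (use zz z psi_pos pos ode[of z] in \<open>auto simp: h_def\<close>)
    moreover have "\<psi> z > 0" using psi_pos zz z by auto
    ultimately have "0 < ((- \<beta> * K + \<gamma> / z - \<psi>' z) / \<beta>) * (- z * \<psi> z)" "- z * \<psi> z < 0"
      using zz by auto
    then show ?thesis by (rule neg_from_prod)
  qed
  have Gu1: "G u1 > E"
  proof -
    have "continuous_on {u1..u0} G" using Gcont[OF u1(3)] .
    moreover have "(G has_real_derivative ((- \<beta> * K + \<gamma> / x - \<psi>' x) / \<beta>)) (at x)" if "u1 < x" "x < u0" for x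
      using Gder[of x] that u1 by simp
    ultimately have "\<exists>z. u1 < z \<and> z < u0 \<and> G u0 - G u1 = (u0 - u1) * ((- \<beta> * K + \<gamma> / z - \<psi>' z) / \<beta>)"
      by (rule mvt_deriv[OF u1(2)])
    then obtain z where z: "u1 < z" "z < u0" "G u0 - G u1 = (u0 - u1) * ((- \<beta> * K + \<gamma> / z - \<psi>' z) / \<beta>)"
      by blast
    have "(u0 - u1) * ((- \<beta> * K + \<gamma> / z - \<psi>' z) / \<beta>) < 0"
      using mult_pos_neg[OF _ Gneg[OF z(1,2)], of "u0 - u1"] u1 by linarith
    then show ?thesis using z Gu0 by linarith
  qed
  define t0 where "t0 = P u1"
  have t0: "t0 > 0" using Pmono[of u1 u0] u1 Pu0 uless by (simp add: t0_def)
  have Eft0: "Ef t0 > Ef 0"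
  proof -
    have "Ef t0 = G u1" using EfG[of t0] t0 UP[of u1] u1 by (simp add: t0_def)
    moreover have "Ef 0 = E" using EfG[of 0] U0 Gu0 by simp
    ultimately show ?thesis using Gu1 by simp
  qed
  have "eventually (\<lambda>t. Ef t < Ef t0) at_top"
    using order_tendstoD(2)[OF Eflim] Efpos[of t0] t0 by simp
  then obtain M0 where M0: "\<And>t. t \<ge> M0 \<Longrightarrow> Ef t < Ef t0" by (auto simp: eventually_at_top_linorder)
  define M where "M = max M0 (t0 + 1)"
  have M: "M \<ge> M0" "t0 < M" using t0 by (auto simp: M_def)
  have Efcont: "continuous_on {0..M} Ef"
  proof -
    have "continuous_on {0..M} (\<lambda>t. G (U t))"
    proof (rule continuous_on_compose2[OF Gcont Ucont])
      show "uinf < U M" using U_in[of M] M t0 by auto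
      show "0 \<le> M" using M t0 by simp
      show "U ` {0..M} \<subseteq> {U M..u0}"
      proof
        fix y assume "y \<in> U ` {0..M}"
        then obtain t where t: "t \<in> {0..M}" "y = U t" by auto
        have "U M \<le> U t" using Umono[of t M] t by (cases "t = M") auto
        then show "y \<in> {U M..u0}" using U_in[of t] t by auto
      qed
    qed
    then show ?thesis by (rule continuous_on_cong[THEN iffD1, rotated 2]) (use EfG in auto)
  qed
  obtain T1 where T1: "T1 \<in> {0..M}" "\<And>y. y \<in> {0..M} \<Longrightarrow> Ef y \<le> Ef T1"
    using continuous_attains_sup[OF compact_Icc _ Efcont] M t0 by auto
  have ge: "Ef t0 \<le> Ef T1" using T1(2)[of t0] t0 M by auto
  have T1pos: "T1 > 0" using T1(1) ge Eft0 by (cases "T1 = 0") auto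
  have T1M: "T1 < M" using T1(1) ge M0[of M] M by (cases "T1 = M") auto
  have glob: "Ef t \<le> Ef T1" if "t \<ge> 0" for t
  proof (cases "t \<le> M")
    case True then show ?thesis using T1(2) that by auto
  next
    case False then show ?thesis using M0[of t] M ge by auto
  qed
  have "Ed T1 = 0"
  proof (rule DERIV_local_max[OF Efder[OF T1pos] T1pos])
    show "\<forall>y. \<bar>T1 - y\<bar> < T1 \<longrightarrow> Ef y \<le> Ef T1" using glob by auto
  qed
  show ?thesis using Eflim Efpos Efder T1pos \<open>Ed T1 = 0\<close> glob by blast
qed
end
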